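(* Let $f:\{0,1\}^n\to\{0,1\}$ be an arbitrary symmetric Boolean function. Then \[D(f)\le O\!\left(\max\{\mathsf N(f)^6,\mathsf N(\overline f)^6\}\right).\]
   Context: $\mathsf N(f)$ is the minimum degree of a real polynomial $p$ with $|p(x)|\le1/3$ whenever $f(x)=0$ and $|p(x)|\ge1$ whenever $f(x)=1$; $\overline f=1-f$. $f$ is symmetric if $f(x)=f(x')$ whenever $x,x'$ have the same Hamming weight. $D(f)$ is deterministic decision tree complexity. Constants in $O(\cdot)$ are absolute. *)

theory Defs
  imports Complex_Main
begin

text \<open>Inputs in {0,1}^n are boolean lists of length n (True = 1).
  A Boolean function is f :: bool list => bool, considered on lists of length n.\<close>

definition hamming_weight :: "bool list \<Rightarrow> nat" where
  "hamming_weight x = length (filter id x)"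

definition symmetric_fun :: "nat \<Rightarrow> (bool list \<Rightarrow> bool) \<Rightarrow> bool" where
  "symmetric_fun n f \<longleftrightarrow> (\<forall>x y. length x = n \<longrightarrow> length y = n \<longrightarrow>
      hamming_weight x = hamming_weight y \<longrightarrow> f x = f y)"

datatype dtree = Leaf bool | Node nat dtree dtree

fun dt_eval :: "dtree \<Rightarrow> bool list \<Rightarrow> bool" where
  "dt_eval (Leaf b) x = b"
| "dt_eval (Node i t0 t1) x = (if x ! i then dt_eval t1 x else dt_eval t0 x)"

fun dt_depth :: "dtree \<Rightarrow> nat" where
  "dt_depth (Leaf b) = 0"
| "dt_depth (Node i t0 t1) = Suc (max (dt_depth t0) (dt_depth t1))"

fun dt_valid :: "nat \<Rightarrow> dtree \<Rightarrow> bool" where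
  "dt_valid n (Leaf b) = True"
| "dt_valid n (Node i t0 t1) = (i < n \<and> dt_valid n t0 \<and> dt_valid n t1)"

definition D :: "nat \<Rightarrow> (bool list \<Rightarrow> bool) \<Rightarrow> nat" where
  "D n f = (LEAST d. \<exists>t. dt_valid n t \<and> dt_depth t = d \<and>
                        (\<forall>x. length x = n \<longrightarrow> dt_eval t x = f x))"

text \<open>Real polynomials on {0,1}^n, in multilinear form (every real polynomial agrees on the
  cube with a multilinear one of no larger degree): coefficient c S for monomial prod_{i in S} x_i,
  S a subset of {0..<n}.\<close>

definition mpoly_eval :: "nat \<Rightarrow> (nat set \<Rightarrow> real) \<Rightarrow> bool list \<Rightarrow> real" where
  "mpoly_eval n c x = (\<Sum>S\<in>Pow {0..<n}. c S * (\<Prod>i\<in>S. (if x ! i then 1 else 0)))"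

definition mpoly_deg_le :: "nat \<Rightarrow> (nat set \<Rightarrow> real) \<Rightarrow> nat \<Rightarrow> bool" where
  "mpoly_deg_le n c d \<longleftrightarrow> (\<forall>S\<in>Pow {0..<n}. c S \<noteq> 0 \<longrightarrow> card S \<le> d)"

definition N :: "nat \<Rightarrow> (bool list \<Rightarrow> bool) \<Rightarrow> nat" where
  "N n f = (LEAST d. \<exists>c. mpoly_deg_le n c d \<and>
      (\<forall>x. length x = n \<longrightarrow>
          (\<not> f x \<longrightarrow> \<bar>mpoly_eval n c x\<bar> \<le> 1/3) \<and>
          (f x \<longrightarrow> \<bar>mpoly_eval n c x\<bar> \<ge> 1)))"

end

theory Submission
  imports Defs "HOL-Computational_Algebra.Polynomial"
begin

lemma lagrange_interp:
  fixes R :: "real poly" and a :: "nat \<Rightarrow> real"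
  assumes deg: "degree R \<le> DD" and inj: "inj_on a {..DD}"
  shows "poly R z = (\<Sum>i\<le>DD. poly R (a i) * (\<Prod>k\<in>{..DD}-{i}. (z - a k) / (a i - a k)))"
proof -
  define L where "L = (\<Sum>i\<le>DD. smult (poly R (a i) / (\<Prod>k\<in>{..DD}-{i}. (a i - a k)))
                         (\<Prod>k\<in>{..DD}-{i}. [:- a k, 1:]))"
  have polyL: "poly L z = (\<Sum>i\<le>DD. poly R (a i) * (\<Prod>k\<in>{..DD}-{i}. (z - a k) / (a i - a k)))" for z
    unfolding L_def poly_sum poly_smult poly_prod
    by (intro sum.cong refl) (simp add: prod_dividef)
  have degL: "degree L \<le> DD"
    unfolding L_def
  proof (intro degree_sum_le)
    fix i assume i: "i \<in> {..DD}"
    have "degree (\<Prod>k\<in>{..DD}-{i}. [:- a k, 1:]) \<le> (\<Sum>k\<in>{..DD}-{i}. degree [:- a k, 1:])"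
      using degree_prod_sum_le[of "{..DD}-{i}" "\<lambda>k. [:- a k, 1:]"] by (simp add: o_def)
    also have "\<dots> = card ({..DD}-{i})" by simp
    also have "\<dots> \<le> DD" using i by auto
    finally show "degree (smult (poly R (a i) / (\<Prod>k\<in>{..DD}-{i}. (a i - a k)))
                         (\<Prod>k\<in>{..DD}-{i}. [:- a k, 1:])) \<le> DD"
      using degree_smult_le order_trans by blast
  qed auto
  have agree: "poly R x = poly L x" if xin: "x \<in> a ` {..DD}" for x
  proof -
    obtain j where j: "j \<le> DD" "x = a j" using xin by auto
    have z: "poly R (a i) * (\<Prod>k\<in>{..DD}-{i}. (a j - a k) / (a i - a k)) = 0"
      if "i \<le> DD" "i \<noteq> j" for i
    proof -
      have "(\<Prod>k\<in>{..DD}-{i}. (a j - a k) / (a i - a k)) = 0"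
      proof (rule prod_zero)
        show "finite ({..DD}-{i})" by simp
        show "\<exists>k\<in>{..DD}-{i}. (a j - a k) / (a i - a k) = 0"
          using j(1) that by (intro bexI[of _ j]) auto
      qed
      thus ?thesis by simp
    qed
    have "poly L x = poly R (a j) * (\<Prod>k\<in>{..DD}-{j}. (a j - a k) / (a j - a k))
            + (\<Sum>i\<in>{..DD}-{j}. poly R (a i) * (\<Prod>k\<in>{..DD}-{i}. (a j - a k) / (a i - a k)))"
      unfolding polyL j(2) using j(1) by (subst sum.remove[of _ j]) simp_all
    also have "(\<Sum>i\<in>{..DD}-{j}. poly R (a i) * (\<Prod>k\<in>{..DD}-{i}. (a j - a k) / (a i - a k))) = 0"
      using z by (intro sum.neutral) auto
    also have "(\<Prod>k\<in>{..DD}-{j}. (a j - a k) / (a j - a k)) = 1"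
    proof (intro prod.neutral ballI)
      fix k assume k: "k \<in> {..DD}-{j}"
      hence "a j \<noteq> a k" using inj j by (auto dest: inj_onD)
      thus "(a j - a k) / (a j - a k) = 1" by simp
    qed
    finally show ?thesis using j by simp
  qed
  have "R = L"
  proof (rule poly_eqI_degree[OF agree])
    have "card (a ` {..DD}) = Suc DD" using inj by (simp add: card_image)
    thus "degree R < card (a ` {..DD})" "degree L < card (a ` {..DD})" using deg degL by auto
  qed
  hence "poly R z = poly L z" by simp
  thus ?thesis using polyL[of z] by simp
qed


lemma prod_i_plus: "fact (i - 1) * (\<Prod>k<m. real i + real k) = fact (i + m - 1)" if "i \<ge> 1"
proof (induction m)
  case 0 then show ?case by simp
next
  case (Suc m)
  have "fact (i - 1) * (\<Prod>k<Suc m. real i + real k) = fact (i + m - 1) * (real i + real m)"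
    using Suc.IH by (simp add: mult.assoc[symmetric])
  also have "\<dots> = fact (i + Suc m - 1)"
  proof -
    have e: "i + Suc m - 1 = Suc (i + m - 1)" using that by simp
    have "real (Suc (i + m - 1)) = real i + real m" using that by simp
    thus ?thesis unfolding e fact_Suc by simp
  qed
  finally show ?case .
qed

lemma prod_i_minus: "(\<Prod>k<i. real i - real k) = fact i"
proof -
  have "fact i = (\<Prod>k=0..<i. real (i - k))"
    by (simp add: fact_prod_rev of_nat_prod)
  also have "\<dots> = (\<Prod>k<i. real i - real k)"
    by (intro prod.cong) (auto simp: of_nat_diff atLeast0LessThan)
  finally show ?thesis by simp
qed

lemma G_base: "2 * (\<Prod>k<i. real i ^ 2 - real k ^ 2) = fact (2 * i)" if "i \<ge> 1"
proof -
  have "(\<Prod>k<i. real i ^ 2 - real k ^ 2) = (\<Prod>k<i. (real i - real k) * (real i + real k))"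
    by (intro prod.cong) (auto simp: power2_eq_square algebra_simps)
  also have "\<dots> = fact i * (\<Prod>k<i. real i + real k)"
    by (simp only: prod.distrib prod_i_minus)
  finally have e: "(\<Prod>k<i. real i ^ 2 - real k ^ 2) = fact i * (\<Prod>k<i. real i + real k)" .
  have f1: "(fact i :: real) = real i * fact (i - 1)" using fact_reduce[of i] that by simp
  have f2: "(fact (2 * i) :: real) = real (2 * i) * fact (2 * i - 1)" using fact_reduce[of "2 * i"] that by simp
  have f3: "fact (i - 1) * (\<Prod>k<i. real i + real k) = fact (2 * i - 1)"
    using prod_i_plus[OF that, of i] by (simp add: mult_2)
  have "2 * (\<Prod>k<i. real i ^ 2 - real k ^ 2) = 2 * real i * (fact (i - 1) * (\<Prod>k<i. real i + real k))"
    unfolding e f1 by (simp only: mult_ac)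
  also have "\<dots> = fact (2 * i)" unfolding f3 f2 by simp
  finally show ?thesis .
qed

lemma G_exact:
  assumes "1 \<le> i" "i \<le> DD"
  shows "2 * (\<Prod>k\<in>{..DD}-{i}. \<bar>real i ^ 2 - real k ^ 2\<bar>) = fact (DD - i) * fact (DD + i)"
  using assms(2)
proof (induction DD rule: dec_induct)
  case base
  have "{..i}-{i} = {..<i}" by auto
  moreover have "\<bar>real i ^ 2 - real k ^ 2\<bar> = real i ^ 2 - real k ^ 2" if "k < i" for k
  proof -
    have "real k ^ 2 \<le> real i ^ 2" using that by (intro power_mono) auto
    thus ?thesis by linarith
  qed
  ultimately have pe: "(\<Prod>k\<in>{..i}-{i}. \<bar>real i ^ 2 - real k ^ 2\<bar>) = (\<Prod>k<i. real i ^ 2 - real k ^ 2)"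
    by (metis (no_types, lifting) lessThan_iff prod.cong)
  have ii: "i + i = 2 * i" by simp
  show ?case unfolding pe G_base[OF assms(1)] ii by simp
next
  case (step DD)
  define P where "P = (\<Prod>k\<in>{..DD}-{i}. \<bar>real i ^ 2 - real k ^ 2\<bar>)"
  have "{..Suc DD}-{i} = insert (Suc DD) ({..DD}-{i})" using step by auto
  hence e1: "(\<Prod>k\<in>{..Suc DD}-{i}. \<bar>real i ^ 2 - real k ^ 2\<bar>)
        = \<bar>real i ^ 2 - real (Suc DD) ^ 2\<bar> * P"
    unfolding P_def by simp
  have e2: "\<bar>real i ^ 2 - real (Suc DD) ^ 2\<bar> = (real (Suc DD) - real i) * (real (Suc DD) + real i)"
  proof -
    have "real i < real (Suc DD)" using step by simp
    hence "real i ^ 2 < real (Suc DD) ^ 2" by (intro power_strict_mono) auto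
    thus ?thesis by (simp add: power2_eq_square algebra_simps)
  qed
  have e3: "(fact (Suc DD - i) :: real) = (real (Suc DD) - real i) * fact (DD - i)"
  proof -
    have "Suc DD - i = Suc (DD - i)" using step by simp
    thus ?thesis using step by (simp add: of_nat_diff)
  qed
  have e4: "(fact (Suc DD + i) :: real) = (real (Suc DD) + real i) * fact (DD + i)"
    by simp
  have "2 * (\<Prod>k\<in>{..Suc DD}-{i}. \<bar>real i ^ 2 - real k ^ 2\<bar>)
     = (real (Suc DD) - real i) * (real (Suc DD) + real i) * (2 * P)"
    unfolding e1 e2 by (simp only: mult_ac)
  also have "2 * P = fact (DD - i) * fact (DD + i)" using step.IH unfolding P_def .
  also have "(real (Suc DD) - real i) * (real (Suc DD) + real i) * (fact (DD - i) * fact (DD + i))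
     = fact (Suc DD - i) * fact (Suc DD + i)"
    unfolding e3 e4 by (simp only: mult_ac)
  finally show ?case .
qed


lemma fact_sq_le: "i \<le> DD \<Longrightarrow> (fact DD :: real) ^ 2 \<le> fact (DD - i) * fact (DD + i)"
proof (induction i)
  case 0 then show ?case by (simp add: power2_eq_square)
next
  case (Suc i)
  have IH: "(fact DD :: real) ^ 2 \<le> fact (DD - i) * fact (DD + i)" using Suc by simp
  have a: "fact (DD - i) = real (DD - i) * fact (DD - Suc i)"
    using Suc.prems by (metis Suc_diff_Suc Suc_le_lessD fact_Suc diff_Suc_1 of_nat_fact of_nat_mult)
  have b: "fact (DD + Suc i) = real (DD + Suc i) * fact (DD + i)" by simp
  have "fact (DD - i) * fact (DD + i) \<le> (fact (DD - Suc i) * fact (DD + Suc i) :: real)"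
  proof -
    have "fact (DD - i) * fact (DD + i) = real (DD - i) * (fact (DD - Suc i) * fact (DD + i) :: real)"
      using a by simp
    also have "\<dots> \<le> real (DD + Suc i) * (fact (DD - Suc i) * fact (DD + i))"
      by (intro mult_right_mono) auto
    also have "\<dots> = fact (DD - Suc i) * fact (DD + Suc i)" using b by simp
    finally show ?thesis .
  qed
  thus ?case using IH by linarith
qed

lemma G_bound:
  assumes "i \<le> DD"
  shows "(fact DD :: real) ^ 2 \<le> 2 * (\<Prod>k\<in>{..DD}-{i}. \<bar>real i ^ 2 - real k ^ 2\<bar>)"
proof (cases "i = 0")
  case True
  have "{..DD}-{0} = {1..DD}" by auto
  hence "(\<Prod>k\<in>{..DD}-{i}. \<bar>real i ^ 2 - real k ^ 2\<bar>) = (\<Prod>k\<in>{1..DD}. real k) ^ 2"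
    using True by (simp add: power_mult_distrib prod_power_distrib)
  also have "(\<Prod>k\<in>{1..DD}. real k) = fact DD" by (simp add: fact_prod)
  finally show ?thesis by simp
next
  case False
  thus ?thesis using G_exact[of i DD] fact_sq_le[OF assms] assms by simp
qed

lemma PA_bound: "(\<Prod>k\<le>DD. 1 + 4 * real k ^ 2) \<le> (2 - 1 / (real DD + 1)) * 4 ^ DD * (fact DD) ^ 2"
proof (induction DD)
  case 0 then show ?case by simp
next
  case (Suc DD)
  define x where "x = real DD + 1"
  have x1: "x \<ge> 1" by (simp add: x_def)
  have "(\<Prod>k\<le>Suc DD. 1 + 4 * real k ^ 2) = (\<Prod>k\<le>DD. 1 + 4 * real k ^ 2) * (1 + 4 * x ^ 2)"
    by (simp add: x_def)
  also have "\<dots> \<le> (2 - 1 / x) * 4 ^ DD * (fact DD) ^ 2 * (1 + 4 * x ^ 2)"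
    using Suc by (intro mult_right_mono) (auto simp: x_def)
  also have "\<dots> \<le> (2 - 1 / (x + 1)) * 4 ^ Suc DD * (fact (Suc DD)) ^ 2"
  proof -
    have "(2 - 1 / x) * (1 + 4 * x ^ 2) \<le> (2 - 1 / (x + 1)) * (4 * x ^ 2)"
    proof -
      have "(2 - 1 / x) * (1 + 4 * x ^ 2) = 2 + 8 * x^2 - 1/x - 4 * x"
        using x1 by (simp add: field_simps power2_eq_square)
      moreover have "(2 - 1 / (x + 1)) * (4 * x ^ 2) = 8 * x^2 - 4 * x + 4 * x / (x + 1)"
        using x1 by (simp add: field_simps power2_eq_square)
      moreover have "2 \<le> 4 * x / (x + 1)" using x1 by (simp add: field_simps)
      moreover have "0 < 1 / x" using x1 by simp
      ultimately show ?thesis by linarith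
    qed
    define A where "A = (4::real) ^ DD * (fact DD) ^ 2"
    have A0: "A \<ge> 0" by (simp add: A_def)
    have l: "(2 - 1 / x) * 4 ^ DD * (fact DD) ^ 2 * (1 + 4 * x ^ 2) = ((2 - 1 / x) * (1 + 4 * x ^ 2)) * A"
      using x1 by (simp add: A_def field_simps)
    have fs: "(fact (Suc DD) :: real) = x * fact DD" by (simp add: x_def)
    have r: "(2 - 1 / (x + 1)) * 4 ^ Suc DD * (fact (Suc DD)) ^ 2 = ((2 - 1 / (x + 1)) * (4 * x ^ 2)) * A"
      unfolding fs by (simp add: A_def power_mult_distrib algebra_simps)
    show ?thesis unfolding l r using A0 \<open>(2 - 1 / x) * (1 + 4 * x ^ 2) \<le> _\<close> by (rule mult_right_mono[rotated])
  qed
  finally show ?case by (simp add: x_def)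
qed

lemma inv_sum_bound: "(\<Sum>i\<le>DD. 1 / (1 + 4 * real i ^ 2)) \<le> 3/2 - 1 / (2 * (real DD + 1))"
proof (induction DD)
  case 0 then show ?case by simp
next
  case (Suc DD)
  define x where "x = real DD + 1"
  have x1: "x \<ge> 1" by (simp add: x_def)
  have "1 / (1 + 4 * x ^ 2) \<le> 1 / (2 * x) - 1 / (2 * (x + 1))"
  proof -
    have "1 / (2 * x) - 1 / (2 * (x + 1)) = 1 / (2 * x * (x + 1))"
      using x1 by (simp add: field_simps)
    also have "1 / (1 + 4 * x ^ 2) \<le> 1 / (2 * x * (x + 1))"
    proof (intro divide_left_mono)
      have "x \<le> x * x" using x1 by (simp add: mult_le_cancel_left1)
      thus "2 * x * (x + 1) \<le> 1 + 4 * x ^ 2" by (simp add: power2_eq_square algebra_simps)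
      show "0 < (1 + 4 * x ^ 2) * (2 * x * (x + 1))" using x1 by (intro mult_pos_pos) (auto simp: add_pos_nonneg)
    qed simp
    finally show ?thesis by linarith
  qed
  moreover have se: "(\<Sum>i\<le>Suc DD. 1 / (1 + 4 * real i ^ 2)) = (\<Sum>i\<le>DD. 1 / (1 + 4 * real i ^ 2)) + 1 / (1 + 4 * x ^ 2)"
    by (simp add: x_def)
  moreover have g: "real (Suc DD) + 1 = x + 1" by (simp add: x_def)
  moreover have IH: "(\<Sum>i\<le>DD. 1 / (1 + 4 * real i ^ 2)) \<le> 3/2 - 1 / (2 * x)" using Suc.IH unfolding x_def .
  ultimately show ?case unfolding g se by linarith
qed


lemma weight_bound:
  assumes iD: "i \<le> DD"
  shows "\<bar>\<Prod>k\<in>{..DD}-{i}. (0 - (1 + 4 * real k ^ 2)) / ((1 + 4 * real i ^ 2) - (1 + 4 * real k ^ 2))\<bar>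
         \<le> 4 / (1 + 4 * real i ^ 2)"
proof -
  define a where "a = (\<lambda>k::nat. 1 + 4 * real k ^ 2)"
  have apos: "a k > 0" for k by (simp add: a_def add_pos_nonneg)
  define G where "G = (\<Prod>k\<in>{..DD}-{i}. \<bar>real i ^ 2 - real k ^ 2\<bar>)"
  define PA where "PA = (\<Prod>k\<le>DD. a k)"
  define F where "F = (fact DD :: real) ^ 2"
  have Fpos: "F > 0" by (simp add: F_def)
  have GF: "F \<le> 2 * G" using G_bound[OF iD] by (simp add: F_def G_def)
  have PAF: "PA \<le> 2 * 4 ^ DD * F"
  proof -
    have "PA \<le> (2 - 1 / (real DD + 1)) * 4 ^ DD * F" using PA_bound[of DD] by (simp add: PA_def a_def F_def)
    also have "\<dots> \<le> 2 * 4 ^ DD * F" using Fpos by (intro mult_right_mono) auto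
    finally show ?thesis .
  qed
  have "\<bar>\<Prod>k\<in>{..DD}-{i}. (0 - a k) / (a i - a k)\<bar> = (\<Prod>k\<in>{..DD}-{i}. a k) / (\<Prod>k\<in>{..DD}-{i}. \<bar>a i - a k\<bar>)"
  proof -
    have aabs: "\<bar>a k\<bar> = a k" for k using apos[of k] by simp
    show ?thesis by (simp add: abs_prod prod_dividef[symmetric] abs_divide abs_minus_commute aabs)
  qed
  also have "(\<Prod>k\<in>{..DD}-{i}. a k) = PA / a i"
  proof -
    have "PA = a i * (\<Prod>k\<in>{..DD}-{i}. a k)" unfolding PA_def using iD by (subst prod.remove[of _ i]) auto
    thus ?thesis using apos[of i] by (simp add: field_simps)
  qed
  also have "(\<Prod>k\<in>{..DD}-{i}. \<bar>a i - a k\<bar>) = 4 ^ DD * G"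
  proof -
    have "(\<Prod>k\<in>{..DD}-{i}. \<bar>a i - a k\<bar>) = (\<Prod>k\<in>{..DD}-{i}. 4 * \<bar>real i ^ 2 - real k ^ 2\<bar>)"
    proof (intro prod.cong refl)
      fix k
      have "a i - a k = 4 * (real i ^ 2 - real k ^ 2)" by (simp add: a_def algebra_simps)
      thus "\<bar>a i - a k\<bar> = 4 * \<bar>real i ^ 2 - real k ^ 2\<bar>" by (simp only: abs_mult abs_numeral)
    qed
    also have "\<dots> = 4 ^ card ({..DD}-{i}) * G" by (simp add: prod.distrib G_def)
    also have "card ({..DD}-{i}) = DD" using iD by simp
    finally show ?thesis .
  qed
  also have "PA / a i / (4 ^ DD * G) \<le> 4 / a i"
  proof -
    have Gpos: "G > 0" using GF Fpos by linarith
    have "2 * 4 ^ DD * F \<le> 2 * 4 ^ DD * (2 * G)" using GF by (intro mult_left_mono) auto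
    moreover have "2 * 4 ^ DD * (2 * G) = 4 * (4 ^ DD * G)" by simp
    ultimately have "PA \<le> 4 * (4 ^ DD * G)" using PAF by linarith
    hence "PA / (4 ^ DD * G) \<le> 4" using Gpos by (simp add: divide_le_eq)
    hence "PA / (4 ^ DD * G) / a i \<le> 4 / a i" using apos[of i] by (intro divide_right_mono) auto
    thus ?thesis by (simp add: divide_divide_eq_left mult.commute)
  qed
  finally have "\<bar>\<Prod>k\<in>{..DD}-{i}. (0 - a k) / (a i - a k)\<bar> \<le> 4 / a i" .
  thus ?thesis unfolding a_def .
qed

lemma lag_bound:
  fixes R :: "real poly"
  assumes deg: "degree R \<le> DD" and sm: "\<And>i. i \<le> DD \<Longrightarrow> \<bar>poly R (1 + 4 * real i ^ 2)\<bar> \<le> 1/9"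
  shows "\<bar>poly R 0\<bar> < 1"
proof -
  define a where "a = (\<lambda>k::nat. 1 + 4 * real k ^ 2)"
  have apos: "a k > 0" for k by (simp add: a_def add_pos_nonneg)
  have inj: "inj_on a {..DD}"
    by (auto simp: inj_on_def a_def)
  have "\<bar>poly R 0\<bar> = \<bar>\<Sum>i\<le>DD. poly R (a i) * (\<Prod>k\<in>{..DD}-{i}. (0 - a k) / (a i - a k))\<bar>"
    using lagrange_interp[OF deg inj, of 0] by simp
  also have "\<dots> \<le> (\<Sum>i\<le>DD. \<bar>poly R (a i)\<bar> * \<bar>\<Prod>k\<in>{..DD}-{i}. (0 - a k) / (a i - a k)\<bar>)"
    by (rule order_trans[OF sum_abs]) (simp add: abs_mult)
  also have "\<dots> \<le> (\<Sum>i\<le>DD. 1/9 * (4 / a i))"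
  proof (intro sum_mono mult_mono)
    fix i assume "i \<in> {..DD}"
    thus "\<bar>poly R (a i)\<bar> \<le> 1/9" using sm by (simp add: a_def)
    show "\<bar>\<Prod>k\<in>{..DD}-{i}. (0 - a k) / (a i - a k)\<bar> \<le> 4 / a i"
      using weight_bound[of i DD] \<open>i \<in> {..DD}\<close> by (simp add: a_def)
  qed auto
  also have "\<dots> = 4/9 * (\<Sum>i\<le>DD. 1 / a i)" by (simp add: sum_distrib_left)
  also have "\<dots> \<le> 4/9 * (3/2)"
  proof -
    have "(\<Sum>i\<le>DD. 1 / a i) \<le> 3/2" using inv_sum_bound[of DD] unfolding a_def
      by (smt (verit) divide_nonneg_pos of_nat_less_0_iff)
    thus ?thesis by simp
  qed
  finally show ?thesis by simp
qed

lemma no_long_run: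
  fixes Q :: "real poly"
  assumes deg: "degree Q \<le> K" and big: "poly Q (real p) \<ge> 1"
    and c: "c = 1 \<or> c = -1"
    and nodes: "\<And>i. i \<le> K \<Longrightarrow> \<bar>poly Q (real p + c * (1 + 4 * real i ^ 2))\<bar> \<le> 1/9"
  shows False
proof -
  define R where "R = pcompose Q [:real p, c:]"
  have "degree R \<le> degree Q * degree [:real p, c:]" unfolding R_def by (rule degree_pcompose_le)
  also have "degree [:real p, c:] \<le> 1" by simp
  hence "degree Q * degree [:real p, c:] \<le> degree Q" by (metis mult.right_neutral mult_le_mono2)
  finally have dR: "degree R \<le> K" using deg by linarith
  have pR: "poly R u = poly Q (real p + c * u)" for u unfolding R_def by (simp add: poly_pcompose mult.commute)
  have "\<bar>poly R 0\<bar> < 1" by (rule lag_bound[OF dR]) (use nodes in \<open>simp add: pR\<close>)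
  with big show False by (simp add: pR)
qed

lemma comb:
  fixes F :: "nat \<Rightarrow> bool" and Q1 Q2 :: "real poly" and K n a b :: nat
  assumes d1: "degree Q1 \<le> K" and d2: "degree Q2 \<le> K"
  and q1s: "\<And>k. k \<le> n \<Longrightarrow> \<not> F k \<Longrightarrow> \<bar>poly Q1 (real k)\<bar> \<le> 1/9"
  and q1l: "\<And>k. k \<le> n \<Longrightarrow> F k \<Longrightarrow> poly Q1 (real k) \<ge> 1"
  and q2s: "\<And>k. k \<le> n \<Longrightarrow> F k \<Longrightarrow> \<bar>poly Q2 (real k)\<bar> \<le> 1/9"
  and q2l: "\<And>k. k \<le> n \<Longrightarrow> \<not> F k \<Longrightarrow> poly Q2 (real k) \<ge> 1"
  and nc: "a \<le> n" "b \<le> n" "F a \<noteq> F b"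
  shows "n + 1 \<le> K * (8 * K^2 + 1)"
proof -
  define Tr where "Tr = {t. t < n \<and> F t \<noteq> F (Suc t)}"
  define M where "M = 4 * K^2"
  have finTr: "finite Tr" unfolding Tr_def by simp
  have cardTr: "card Tr \<le> K"
  proof -
    define P where "P = Q1 - [:1/2:]"
    have pP: "poly P x = poly Q1 x - 1/2" for x by (simp add: P_def)
    have sgn: "(\<not> F k \<longrightarrow> poly P (real k) < 0) \<and> (F k \<longrightarrow> poly P (real k) > 0)" if "k \<le> n" for k
      using q1s[OF that] q1l[OF that] by (auto simp: pP)
    have P0: "P \<noteq> 0"
    proof
      assume "P = 0"
      hence "poly P 0 = 0" by simp
      thus False using sgn[of 0] by (cases "F 0") auto
    qed
    have "\<forall>t\<in>Tr. \<exists>r. real t < r \<and> r < real (Suc t) \<and> poly P r = 0"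
    proof
      fix t assume "t \<in> Tr"
      hence t: "t < n" "F t \<noteq> F (Suc t)" by (auto simp: Tr_def)
      show "\<exists>r. real t < r \<and> r < real (Suc t) \<and> poly P r = 0"
      proof (cases "F t")
        case True
        hence "poly P (real t) > 0" "poly P (real (Suc t)) < 0" using sgn[of t] sgn[of "Suc t"] t by auto
        thus ?thesis by (intro poly_IVT_neg) auto
      next
        case False
        hence "poly P (real t) < 0" "poly P (real (Suc t)) > 0" using sgn[of t] sgn[of "Suc t"] t by auto
        thus ?thesis by (intro poly_IVT_pos) auto
      qed
    qed
    from bchoice[OF this] obtain r where r0: "\<forall>t\<in>Tr. real t < r t \<and> r t < real (Suc t) \<and> poly P (r t) = 0"
      by blast
    have r: "real t < r t \<and> r t < real (Suc t) \<and> poly P (r t) = 0" if "t \<in> Tr" for t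
      using r0 that by blast
    have inj: "inj_on r Tr"
    proof (rule inj_onI)
      fix s t assume st: "s \<in> Tr" "t \<in> Tr" "r s = r t"
      have "real s < real (Suc t)" "real t < real (Suc s)" using r[OF st(1)] r[OF st(2)] st(3) by auto
      thus "s = t" by simp
    qed
    have "card Tr = card (r ` Tr)" using inj by (simp add: card_image)
    also have "\<dots> \<le> card {x. poly P x = 0}"
      using r by (intro card_mono poly_roots_finite[OF P0]) auto
    also have "\<dots> \<le> degree P" by (rule card_poly_roots_bound[OF P0])
    also have "degree P \<le> K" unfolding P_def by (rule degree_diff_le[OF d1]) simp
    finally show ?thesis .
  qed
  have near: "\<exists>t\<in>Tr. j \<le> t + M \<and> t \<le> j + M" if jn: "j \<le> n" for j
  proof -
    define dst where "dst = (\<lambda>p::nat. if j \<le> p then p - j else j - p)"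
    have "\<exists>p. (p \<le> n \<and> F p \<noteq> F j)" using nc by (cases "F a = F j") auto
    then obtain p where p: "p \<le> n" "F p \<noteq> F j"
      and pmin: "\<And>q. q \<le> n \<Longrightarrow> F q \<noteq> F j \<Longrightarrow> dst p \<le> dst q"
      using ex_has_least_nat[of "\<lambda>p. p \<le> n \<and> F p \<noteq> F j" _ dst] by blast
    have pj: "p \<noteq> j" using p by auto
    define Q where "Q = (if F j then Q2 else Q1)"
    have dQ: "degree Q \<le> K" using d1 d2 by (simp add: Q_def)
    have bigQ: "poly Q (real p) \<ge> 1" using p q1l q2l by (auto simp: Q_def)
    have smQ: "\<bar>poly Q (real q)\<bar> \<le> 1/9" if "q \<le> n" "F q = F j" for q
      using that q1s q2s by (auto simp: Q_def)
    have same: "F q = F j" if "q \<le> n" "dst q < dst p" for q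
      using pmin[of q] that by force
    show ?thesis
    proof (cases "j < p")
      case True
      have dM: "p - j \<le> M"
      proof (rule ccontr)
        assume "\<not> p - j \<le> M"
        hence far: "M + 1 \<le> p - j" by simp
        show False
        proof (rule no_long_run[OF dQ bigQ, of "-1"])
          fix i assume i: "i \<le> K"
          have "4 * i^2 \<le> M" unfolding M_def using i by (simp add: power_mono)
          hence le: "1 + 4 * i^2 \<le> p" "j \<le> p - (1 + 4 * i^2)" using far by linarith+
          define q where "q = p - (1 + 4 * i^2)"
          have rq: "real q = real p + -1 * (1 + 4 * real i ^ 2)" unfolding q_def using le(1)
            by (simp add: of_nat_diff)
          have "q \<le> n" "dst q < dst p" using le p(1) True by (auto simp: q_def dst_def)
          hence "F q = F j" using same by blast
          thus "\<bar>poly Q (real p + -1 * (1 + 4 * real i ^ 2))\<bar> \<le> 1/9"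
            using smQ[of q] \<open>q \<le> n\<close> rq by simp
        qed simp
      qed
      define t where "t = p - 1"
      have tS: "Suc t = p" using True by (simp add: t_def)
      have "F t = F j"
      proof (cases "t = j")
        case False
        have "t \<le> n" "dst t < dst p" using False True p(1) by (auto simp: t_def dst_def)
        thus ?thesis using same by blast
      qed simp
      hence "t \<in> Tr" using tS p by (auto simp: Tr_def)
      moreover have "j \<le> t + M" "t \<le> j + M" using dM True by (auto simp: t_def)
      ultimately show ?thesis by blast
    next
      case False
      hence pj': "p < j" using pj by simp
      have dM: "j - p \<le> M"
      proof (rule ccontr)
        assume "\<not> j - p \<le> M"
        hence far: "M + 1 \<le> j - p" by simp
        show False
        proof (rule no_long_run[OF dQ bigQ, of "1"])
          fix i assume i: "i \<le> K"
          have "4 * i^2 \<le> M" unfolding M_def using i by (simp add: power_mono)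
          hence le: "p + (1 + 4 * i^2) \<le> j" using far by linarith
          define q where "q = p + (1 + 4 * i^2)"
          have rq: "real q = real p + 1 * (1 + 4 * real i ^ 2)" unfolding q_def by simp
          have "q \<le> n" "dst q < dst p" using le jn pj' by (auto simp: q_def dst_def)
          hence "F q = F j" using same by blast
          thus "\<bar>poly Q (real p + 1 * (1 + 4 * real i ^ 2))\<bar> \<le> 1/9"
            using smQ[of q] \<open>q \<le> n\<close> rq by simp
        qed simp
      qed
      have "F (Suc p) = F j"
      proof (cases "Suc p = j")
        case False
        have "Suc p \<le> n" "dst (Suc p) < dst p" using False pj' jn by (auto simp: dst_def)
        thus ?thesis using same by blast
      qed simp
      hence "p \<in> Tr" using p pj' jn by (auto simp: Tr_def)
      moreover have "j \<le> p + M" "p \<le> j + M" using dM pj' by auto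
      ultimately show ?thesis by blast
    qed
  qed
  have "{..n} \<subseteq> (\<Union>t\<in>Tr. {t - M..t + M})"
  proof
    fix j assume "j \<in> {..n}"
    then obtain t where "t \<in> Tr" "j \<le> t + M" "t \<le> j + M" using near by blast
    moreover have "t - M \<le> j" using \<open>t \<le> j + M\<close> by simp
    ultimately show "j \<in> (\<Union>t\<in>Tr. {t - M..t + M})" by auto
  qed
  hence "card {..n} \<le> card (\<Union>t\<in>Tr. {t - M..t + M})"
    by (intro card_mono) (auto simp: finTr)
  also have "\<dots> \<le> (\<Sum>t\<in>Tr. card {t - M..t + M})" by (rule card_UN_le[OF finTr])
  also have "\<dots> \<le> (\<Sum>t\<in>Tr. 2 * M + 1)" by (intro sum_mono) auto
  also have "\<dots> = card Tr * (2 * M + 1)" by simp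
  also have "\<dots> \<le> K * (2 * M + 1)" using cardTr by (rule mult_right_mono) simp
  finally show ?thesis by (simp add: M_def)
qed


definition lst :: "nat \<Rightarrow> nat set \<Rightarrow> bool list" where
  "lst n B = map (\<lambda>i. i \<in> B) [0..<n]"

lemma length_lst [simp]: "length (lst n B) = n" by (simp add: lst_def)
lemma nth_lst [simp]: "i < n \<Longrightarrow> lst n B ! i = (i \<in> B)" by (simp add: lst_def)

lemma lst_ones: "length x = n \<Longrightarrow> lst n {i. i < n \<and> x ! i} = x"
  by (intro nth_equalityI) auto

lemma hw_lst: "B \<subseteq> {0..<n} \<Longrightarrow> hamming_weight (lst n B) = card B"
proof -
  assume B: "B \<subseteq> {0..<n}"
  have "hamming_weight (lst n B) = card {i. i < n \<and> id (lst n B ! i)}"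
    unfolding hamming_weight_def by (simp add: length_filter_conv_card)
  also have "{i. i < n \<and> id (lst n B ! i)} = B" using B by auto
  finally show ?thesis .
qed

lemma prod_ind: "finite S \<Longrightarrow> (\<Prod>i\<in>S. (if i \<in> B then 1 else 0 :: real)) = (if S \<subseteq> B then 1 else 0)"
proof (cases "S \<subseteq> B")
  case True
  hence "(\<Prod>i\<in>S. (if i \<in> B then 1 else 0 :: real)) = 1" by (intro prod.neutral) auto
  thus ?thesis using True by simp
next
  case False
  assume "finite S"
  moreover from False obtain i where "i \<in> S" "i \<notin> B" by auto
  ultimately have "(\<Prod>i\<in>S. (if i \<in> B then 1 else 0 :: real)) = 0"
    by (intro prod_zero) auto
  thus ?thesis using False by simp
qed

lemma mpoly_eval_lst:
  "mpoly_eval n c (lst n B) = (\<Sum>S\<in>Pow {0..<n}. c S * (if S \<subseteq> B then 1 else 0))"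
  unfolding mpoly_eval_def
proof (intro sum.cong refl)
  fix S assume S: "S \<in> Pow {0..<n}"
  hence fin: "finite S" by (auto intro: finite_subset)
  have "(\<Prod>i\<in>S. if lst n B ! i then 1 else 0 :: real) = (\<Prod>i\<in>S. if i \<in> B then 1 else 0)"
    using S by (intro prod.cong) auto
  thus "c S * (\<Prod>i\<in>S. if lst n B ! i then 1 else 0) = c S * (if S \<subseteq> B then 1 else 0)"
    using prod_ind[OF fin] by simp
qed

lemma mobius_exists:
  fixes A :: "nat set"
  assumes "finite A"
  shows "\<exists>c. \<forall>X\<subseteq>A. (\<Sum>S\<in>Pow A. c S * (if S \<subseteq> X then 1 else 0)) = (g X :: real)"
  using assms
proof (induction A arbitrary: g rule: finite_induct)
  case empty
  show ?case by (intro exI[of _ "\<lambda>S. g {}"]) auto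
next
  case (insert a A)
  obtain c0 where c0: "\<forall>X\<subseteq>A. (\<Sum>S\<in>Pow A. c0 S * (if S \<subseteq> X then 1 else 0)) = g X"
    using insert.IH[of g] by blast
  obtain c1 where c1: "\<forall>X\<subseteq>A. (\<Sum>S\<in>Pow A. c1 S * (if S \<subseteq> X then 1 else 0)) = g (insert a X)"
    using insert.IH[of "\<lambda>X. g (insert a X)"] by blast
  define c where "c = (\<lambda>S. if a \<in> S then c1 (S - {a}) - c0 (S - {a}) else c0 S)"
  show ?case
  proof (intro exI allI impI)
    fix X assume X: "X \<subseteq> insert a A"
    have disj: "Pow A \<inter> insert a ` Pow A = {}" using insert.hyps by auto
    have inj: "inj_on (insert a) (Pow A)" using insert.hyps
      by (intro inj_onI) (metis PowD insert_absorb insert_ident subsetD)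
    have "(\<Sum>S\<in>Pow (insert a A). c S * (if S \<subseteq> X then 1 else 0))
        = (\<Sum>S\<in>Pow A. c S * (if S \<subseteq> X then 1 else 0))
          + (\<Sum>S\<in>insert a ` Pow A. c S * (if S \<subseteq> X then 1 else 0))"
      unfolding Pow_insert using disj insert.hyps by (intro sum.union_disjoint) auto
    also have "(\<Sum>S\<in>Pow A. c S * (if S \<subseteq> X then 1 else 0))
             = (\<Sum>S\<in>Pow A. c0 S * (if S \<subseteq> X - {a} then 1 else 0))"
      using insert.hyps by (intro sum.cong refl) (auto simp: c_def)
    also have "(\<Sum>S\<in>insert a ` Pow A. c S * (if S \<subseteq> X then 1 else 0))
             = (\<Sum>S\<in>Pow A. c (insert a S) * (if insert a S \<subseteq> X then 1 else 0))"
      by (rule sum.reindex[OF inj, unfolded comp_def])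
    also have "\<dots> = (\<Sum>S\<in>Pow A. (c1 S - c0 S) * (if insert a S \<subseteq> X then 1 else 0))"
    proof (intro sum.cong refl)
      fix S assume "S \<in> Pow A"
      hence "insert a S - {a} = S" using insert.hyps by auto
      thus "c (insert a S) * (if insert a S \<subseteq> X then 1 else 0) = (c1 S - c0 S) * (if insert a S \<subseteq> X then 1 else 0)"
        by (simp add: c_def)
    qed
    finally have eq: "(\<Sum>S\<in>Pow (insert a A). c S * (if S \<subseteq> X then 1 else 0))
        = (\<Sum>S\<in>Pow A. c0 S * (if S \<subseteq> X - {a} then 1 else 0))
          + (\<Sum>S\<in>Pow A. (c1 S - c0 S) * (if insert a S \<subseteq> X then 1 else 0))" .
    have XA: "X - {a} \<subseteq> A" using X by auto
    show "(\<Sum>S\<in>Pow (insert a A). c S * (if S \<subseteq> X then 1 else 0)) = g X"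
    proof (cases "a \<in> X")
      case True
      have "(\<Sum>S\<in>Pow A. (c1 S - c0 S) * (if insert a S \<subseteq> X then 1 else 0))
          = (\<Sum>S\<in>Pow A. c1 S * (if S \<subseteq> X - {a} then 1 else 0)) - (\<Sum>S\<in>Pow A. c0 S * (if S \<subseteq> X - {a} then 1 else 0))"
        unfolding sum_subtractf[symmetric] using True insert.hyps
        by (intro sum.cong refl) (auto simp: algebra_simps)
      also have "\<dots> = g (insert a (X - {a})) - g (X - {a})" using c0 c1 XA by simp
      finally show ?thesis unfolding eq using c0 XA True by (simp add: insert_absorb)
    next
      case False
      have "(\<Sum>S\<in>Pow A. (c1 S - c0 S) * (if insert a S \<subseteq> X then 1 else 0)) = 0"
        using False by (intro sum.neutral) auto
      moreover have "X - {a} = X" using False by simp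
      ultimately show ?thesis unfolding eq using c0 XA by simp
    qed
  qed
qed

lemma N_witness:
  "\<exists>d c. mpoly_deg_le n c d \<and> (\<forall>x. length x = n \<longrightarrow>
          (\<not> f x \<longrightarrow> \<bar>mpoly_eval n c x\<bar> \<le> 1/3) \<and> (f x \<longrightarrow> \<bar>mpoly_eval n c x\<bar> \<ge> 1))"
proof -
  obtain c where c: "\<forall>X\<subseteq>{0..<n}. (\<Sum>S\<in>Pow {0..<n}. c S * (if S \<subseteq> X then 1 else 0))
                     = (if f (lst n X) then 1 else 0 :: real)"
    using mobius_exists[of "{0..<n}" "\<lambda>X. if f (lst n X) then 1 else 0"] by auto
  have "mpoly_deg_le n c n" unfolding mpoly_deg_le_def
    by (auto intro: card_mono[of "{0..<n}", simplified])
  moreover have "mpoly_eval n c x = (if f x then 1 else 0)" if "length x = n" for x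
  proof -
    let ?X = "{i. i < n \<and> x ! i}"
    have "mpoly_eval n c x = mpoly_eval n c (lst n ?X)" using lst_ones[OF that] by simp
    also have "\<dots> = (if f (lst n ?X) then 1 else 0)" unfolding mpoly_eval_lst
      using c[rule_format, of ?X] by (simp add: subset_iff)
    finally show ?thesis using lst_ones[OF that] by simp
  qed
  ultimately show ?thesis by (intro exI[of _ n] exI[of _ c]) auto
qed

lemma N_prop:
  "\<exists>c. mpoly_deg_le n c (N n f) \<and> (\<forall>x. length x = n \<longrightarrow>
          (\<not> f x \<longrightarrow> \<bar>mpoly_eval n c x\<bar> \<le> 1/3) \<and> (f x \<longrightarrow> \<bar>mpoly_eval n c x\<bar> \<ge> 1))"
  unfolding N_def using N_witness[of n f] by (rule LeastI_ex)



definition gp :: "nat \<Rightarrow> real poly" where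
  "gp u = smult (1 / fact u) (\<Prod>i<u. [:- real i, 1:])"

lemma poly_gp: "poly (gp u) (real k) = real (k choose u)"
proof -
  have "real (k choose u) = (\<Prod>i=0..<u. real k - of_nat i) / fact u"
    by (simp add: binomial_gbinomial gbinomial_prod_rev)
  thus ?thesis by (simp add: gp_def poly_prod atLeast0LessThan)
qed

lemma degree_gp: "degree (gp u) \<le> u"
proof -
  have "degree (\<Prod>i<u. [:- real i, 1:]) \<le> (\<Sum>i<u. degree [:- real i, 1:])"
    using degree_prod_sum_le[of "{..<u}" "\<lambda>i. [:- real i, 1:]"] by (simp add: o_def)
  also have "\<dots> = u" by simp
  finally show ?thesis unfolding gp_def using degree_smult_le order_trans by blast
qed

lemma count_sup:
  assumes A: "finite A" and U: "U \<subseteq> A"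
  shows "card {X. X \<subseteq> A \<and> card X = k \<and> U \<subseteq> X} =
         (if card U \<le> k then (card A - card U) choose (k - card U) else 0)"
proof (cases "card U \<le> k")
  case True
  have finU: "finite U" using A U by (rule rev_finite_subset)
  have "bij_betw (\<lambda>X. X - U) {X. X \<subseteq> A \<and> card X = k \<and> U \<subseteq> X} {Y. Y \<subseteq> A - U \<and> card Y = k - card U}"
  proof (rule bij_betw_byWitness[where f' = "\<lambda>Y. Y \<union> U"])
    show "\<forall>X\<in>{X. X \<subseteq> A \<and> card X = k \<and> U \<subseteq> X}. X - U \<union> U = X" by auto
    show "\<forall>Y\<in>{Y. Y \<subseteq> A - U \<and> card Y = k - card U}. Y \<union> U - U = Y" by auto
    show "(\<lambda>X. X - U) ` {X. X \<subseteq> A \<and> card X = k \<and> U \<subseteq> X} \<subseteq> {Y. Y \<subseteq> A - U \<and> card Y = k - card U}"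
    proof clarify
      fix X assume X: "X \<subseteq> A" "U \<subseteq> X" "k = card X"
      have "finite X" using A X(1) by (rule rev_finite_subset)
      thus "X - U \<subseteq> A - U \<and> card (X - U) = card X - card U" using X finU by (auto simp: card_Diff_subset)
    qed
    show "(\<lambda>Y. Y \<union> U) ` {Y. Y \<subseteq> A - U \<and> card Y = k - card U} \<subseteq> {X. X \<subseteq> A \<and> card X = k \<and> U \<subseteq> X}"
    proof
      fix Z assume "Z \<in> (\<lambda>Y. Y \<union> U) ` {Y. Y \<subseteq> A - U \<and> card Y = k - card U}"
      then obtain Y where Y: "Y \<subseteq> A - U" "card Y = k - card U" and Z: "Z = Y \<union> U" by auto
      have "finite Y" using A Y(1) by (meson finite_Diff rev_finite_subset)
      moreover have "Y \<inter> U = {}" using Y by auto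
      ultimately have "card (Y \<union> U) = card Y + card U" using finU by (simp add: card_Un_disjoint)
      hence "card Z = k" using Y(2) True Z by simp
      thus "Z \<in> {X. X \<subseteq> A \<and> card X = k \<and> U \<subseteq> X}" using Y(1) U Z by auto
    qed
  qed
  hence "card {X. X \<subseteq> A \<and> card X = k \<and> U \<subseteq> X} = card {Y. Y \<subseteq> A - U \<and> card Y = k - card U}"
    by (rule bij_betw_same_card)
  also have "\<dots> = card (A - U) choose (k - card U)" using A by (intro n_subsets) auto
  also have "card (A - U) = card A - card U" using U finU by (simp add: card_Diff_subset)
  finally show ?thesis using True by simp
next
  case False
  have E: "{X. X \<subseteq> A \<and> card X = k \<and> U \<subseteq> X} = {}"
  proof (rule ccontr)
    assume "{X. X \<subseteq> A \<and> card X = k \<and> U \<subseteq> X} \<noteq> {}"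
    then obtain X where X: "X \<subseteq> A" "card X = k" "U \<subseteq> X" by auto
    have "finite X" using A X(1) by (rule rev_finite_subset)
    hence "card U \<le> card X" using X(3) by (rule card_mono)
    thus False using False X(2) by simp
  qed
  show ?thesis unfolding E using False by simp
qed

lemma count_ratio:
  assumes U: "U \<subseteq> {0..<n}" and k: "k \<le> n"
  shows "real (card {X. X \<subseteq> {0..<n} \<and> card X = k \<and> U \<subseteq> X})
         = real (n choose k) * real (k choose card U) / real (n choose card U)"
proof -
  have finU: "finite U" using U by (rule finite_subset) simp
  have un: "card U \<le> n" using card_mono[OF _ U] by simp
  have pos: "real (n choose card U) > 0" using un by simp
  show ?thesis
  proof (cases "card U \<le> k")
    case True
    have "(n choose k) * (k choose card U) = (n choose card U) * ((n - card U) choose (k - card U))"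
      using choose_mult[OF True k] .
    hence "real (n choose k) * real (k choose card U) = real (n choose card U) * real ((n - card U) choose (k - card U))"
      by (metis of_nat_mult)
    thus ?thesis using count_sup[of "{0..<n}" U k] U True pos by (simp add: field_simps)
  next
    case False
    have "card {X. X \<subseteq> {0..<n} \<and> card X = k \<and> U \<subseteq> X} =
         (if card U \<le> k then (card {0..<n} - card U) choose (k - card U) else 0)"
      by (rule count_sup) (use U in auto)
    hence c0: "card {X. X \<subseteq> {0..<n} \<and> card X = k \<and> U \<subseteq> X} = 0" by (simp only: if_not_P[OF False])
    have c1: "k choose card U = 0" using False by simp
    show ?thesis unfolding c0 c1 by simp
  qed
qed



lemma sum_sq_eq:
  fixes c :: "nat set \<Rightarrow> real"
  assumes k: "k \<le> n"
  defines "A \<equiv> {0..<n}"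
  defines "pv \<equiv> (\<lambda>X. \<Sum>S\<in>Pow A. c S * (if S \<subseteq> X then 1 else 0))"
  defines "Q \<equiv> (\<Sum>S\<in>Pow A. \<Sum>T\<in>Pow A. smult (c S * c T / real (n choose card (S \<union> T))) (gp (card (S \<union> T))))"
  shows "(\<Sum>X\<in>{X. X \<subseteq> A \<and> card X = k}. (pv X)^2) = real (n choose k) * poly Q (real k)"
proof -
  define Ck where "Ck = {X. X \<subseteq> A \<and> card X = k}"
  have finA: "finite A" by (simp add: A_def)
  have finCk: "finite Ck"
  proof (rule finite_subset)
    show "Ck \<subseteq> Pow A" by (auto simp: Ck_def)
    show "finite (Pow A)" using finA by simp
  qed
  have sq: "(pv X)^2 = (\<Sum>S\<in>Pow A. \<Sum>T\<in>Pow A. c S * c T * (if S \<union> T \<subseteq> X then 1 else 0))" for X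
  proof -
    have "(pv X)^2 = (\<Sum>S\<in>Pow A. \<Sum>T\<in>Pow A. (c S * (if S \<subseteq> X then 1 else 0)) * (c T * (if T \<subseteq> X then 1 else 0)))"
      unfolding pv_def power2_eq_square by (rule sum_product)
    also have "\<dots> = (\<Sum>S\<in>Pow A. \<Sum>T\<in>Pow A. c S * c T * (if S \<union> T \<subseteq> X then 1 else 0))"
      by (intro sum.cong refl) auto
    finally show ?thesis .
  qed
  have "(\<Sum>X\<in>Ck. (pv X)^2) = (\<Sum>X\<in>Ck. \<Sum>S\<in>Pow A. \<Sum>T\<in>Pow A. c S * c T * (if S \<union> T \<subseteq> X then 1 else 0))"
    by (simp add: sq)
  also have "\<dots> = (\<Sum>S\<in>Pow A. \<Sum>X\<in>Ck. \<Sum>T\<in>Pow A. c S * c T * (if S \<union> T \<subseteq> X then 1 else 0))"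
    by (rule sum.swap)
  also have "\<dots> = (\<Sum>S\<in>Pow A. \<Sum>T\<in>Pow A. \<Sum>X\<in>Ck. c S * c T * (if S \<union> T \<subseteq> X then 1 else 0))"
    by (intro sum.cong refl sum.swap)
  also have "\<dots> = (\<Sum>S\<in>Pow A. \<Sum>T\<in>Pow A. real (n choose k) * (c S * c T / real (n choose card (S \<union> T)) * real (k choose card (S \<union> T))))"
  proof (intro sum.cong refl)
    fix S T assume S: "S \<in> Pow A" and T: "T \<in> Pow A"
    have U: "S \<union> T \<subseteq> {0..<n}" using S T by (auto simp: A_def)
    have "(\<Sum>X\<in>Ck. c S * c T * (if S \<union> T \<subseteq> X then 1 else 0)) = c S * c T * (\<Sum>X\<in>Ck. (if S \<union> T \<subseteq> X then 1 else 0))"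
      by (simp add: sum_distrib_left)
    also have "(\<Sum>X\<in>Ck. (if S \<union> T \<subseteq> X then 1 else 0 :: real)) = real (card {X\<in>Ck. S \<union> T \<subseteq> X})"
      using finCk by (simp add: sum.If_cases Int_def)
    also have "{X\<in>Ck. S \<union> T \<subseteq> X} = {X. X \<subseteq> {0..<n} \<and> card X = k \<and> S \<union> T \<subseteq> X}"
      by (auto simp: Ck_def A_def)
    also have "real (card \<dots>) = real (n choose k) * real (k choose card (S \<union> T)) / real (n choose card (S \<union> T))"
      by (rule count_ratio[OF U k])
    finally show "(\<Sum>X\<in>Ck. c S * c T * (if S \<union> T \<subseteq> X then 1 else 0)) =
        real (n choose k) * (c S * c T / real (n choose card (S \<union> T)) * real (k choose card (S \<union> T)))"
      by simp
  qed
  also have "\<dots> = real (n choose k) * poly Q (real k)"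
    unfolding Q_def poly_sum poly_smult poly_gp by (simp add: sum_distrib_left)
  finally show ?thesis unfolding Ck_def .
qed

lemma degree_Q:
  fixes c :: "nat set \<Rightarrow> real"
  assumes dg: "mpoly_deg_le n c d"
  shows "degree (\<Sum>S\<in>Pow {0..<n}. \<Sum>T\<in>Pow {0..<n}. smult (c S * c T / real (n choose card (S \<union> T))) (gp (card (S \<union> T)))) \<le> 2 * d"
proof (intro degree_sum_le)
  fix S T assume S: "S \<in> Pow {0..<n}" and T: "T \<in> Pow {0..<n}"
  show "degree (smult (c S * c T / real (n choose card (S \<union> T))) (gp (card (S \<union> T)))) \<le> 2 * d"
  proof (cases "c S = 0 \<or> c T = 0")
    case True thus ?thesis by auto
  next
    case False
    hence "card S \<le> d" "card T \<le> d" using dg S T by (auto simp: mpoly_deg_le_def)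
    hence "card (S \<union> T) \<le> 2 * d" using card_Un_le[of S T] by linarith
    thus ?thesis using degree_smult_le degree_gp order_trans by metis
  qed
qed auto



lemma symQ:
  assumes sym: "symmetric_fun n g"
  shows "\<exists>Q::real poly. degree Q \<le> 2 * N n g \<and> (\<forall>k\<le>n.
     (\<not> g (lst n {0..<k}) \<longrightarrow> \<bar>poly Q (real k)\<bar> \<le> 1/9) \<and> (g (lst n {0..<k}) \<longrightarrow> poly Q (real k) \<ge> 1))"
proof -
  obtain c where dg: "mpoly_deg_le n c (N n g)" and cp: "\<forall>x. length x = n \<longrightarrow>
          (\<not> g x \<longrightarrow> \<bar>mpoly_eval n c x\<bar> \<le> 1/3) \<and> (g x \<longrightarrow> \<bar>mpoly_eval n c x\<bar> \<ge> 1)"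
    using N_prop[of n g] by blast
  define A where "A = {0..<n}"
  define pv where "pv = (\<lambda>X. \<Sum>S\<in>Pow A. c S * (if S \<subseteq> X then 1 else 0))"
  define Q where "Q = (\<Sum>S\<in>Pow A. \<Sum>T\<in>Pow A. smult (c S * c T / real (n choose card (S \<union> T))) (gp (card (S \<union> T))))"
  have dQ: "degree Q \<le> 2 * N n g" unfolding Q_def A_def by (rule degree_Q[OF dg])
  have vals: "(\<not> g (lst n {0..<k}) \<longrightarrow> \<bar>poly Q (real k)\<bar> \<le> 1/9) \<and> (g (lst n {0..<k}) \<longrightarrow> poly Q (real k) \<ge> 1)"
    if k: "k \<le> n" for k
  proof -
    define Ck where "Ck = {X. X \<subseteq> A \<and> card X = k}"
    have cardCk: "card Ck = n choose k" unfolding Ck_def A_def using n_subsets[of "{0..<n}" k] by simp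
    have Cpos: "real (n choose k) > 0" using k by simp
    have S: "(\<Sum>X\<in>Ck. (pv X)^2) = real (n choose k) * poly Q (real k)"
      unfolding Ck_def pv_def Q_def A_def by (rule sum_sq_eq[OF k])
    have gX: "g (lst n X) = g (lst n {0..<k})" and pvX: "pv X = mpoly_eval n c (lst n X)" if X: "X \<in> Ck" for X
    proof -
      have XA: "X \<subseteq> {0..<n}" "card X = k" using X by (auto simp: Ck_def A_def)
      have "hamming_weight (lst n X) = hamming_weight (lst n {0..<k})"
        using hw_lst[OF XA(1)] hw_lst[of "{0..<k}" n] k XA(2) by auto
      thus "g (lst n X) = g (lst n {0..<k})" using sym unfolding symmetric_fun_def by auto
      show "pv X = mpoly_eval n c (lst n X)" unfolding mpoly_eval_lst pv_def A_def ..
    qed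
    show ?thesis
    proof (intro conjI impI)
      assume ng: "\<not> g (lst n {0..<k})"
      have each: "(pv X)^2 \<le> 1/9" if X: "X \<in> Ck" for X
      proof -
        have "\<bar>pv X\<bar> \<le> 1/3" using cp gX[OF X] pvX[OF X] ng by auto
        hence "\<bar>pv X\<bar>^2 \<le> (1/3)^2" by (intro power_mono) auto
        thus ?thesis by (simp add: power2_eq_square)
      qed
      have "(\<Sum>X\<in>Ck. (pv X)^2) \<le> real (card Ck) * (1/9)" by (rule sum_bounded_above) (use each in auto)
      hence up: "real (n choose k) * poly Q (real k) \<le> real (n choose k) * (1/9)" using S cardCk by simp
      have "0 \<le> (\<Sum>X\<in>Ck. (pv X)^2)" by (intro sum_nonneg) auto
      hence lo: "0 \<le> real (n choose k) * poly Q (real k)" using S by simp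
      have "poly Q (real k) \<le> 1/9" using up Cpos by (simp add: mult_le_cancel_left_pos)
      moreover have "poly Q (real k) \<ge> 0" using lo Cpos by (simp add: zero_le_mult_iff)
      ultimately show "\<bar>poly Q (real k)\<bar> \<le> 1/9" by simp
    next
      assume yg: "g (lst n {0..<k})"
      have each: "1 \<le> (pv X)^2" if X: "X \<in> Ck" for X
      proof -
        have "\<bar>pv X\<bar> \<ge> 1" using cp gX[OF X] pvX[OF X] yg by auto
        hence "1^2 \<le> \<bar>pv X\<bar>^2" by (intro power_mono) auto
        thus ?thesis by (simp add: power2_eq_square)
      qed
      have "real (card Ck) * 1 \<le> (\<Sum>X\<in>Ck. (pv X)^2)" by (rule sum_bounded_below) (use each in auto)
      hence "real (n choose k) * 1 \<le> real (n choose k) * poly Q (real k)" using S cardCk by simp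
      thus "poly Q (real k) \<ge> 1" using Cpos by (simp add: mult_le_cancel_left_pos)
    qed
  qed
  show ?thesis using dQ vals by blast
qed

fun bt :: "(bool list \<Rightarrow> bool) \<Rightarrow> nat \<Rightarrow> bool list \<Rightarrow> dtree" where
  "bt f 0 acc = Leaf (f acc)"
| "bt f (Suc m) acc = Node (length acc) (bt f m (acc @ [False])) (bt f m (acc @ [True]))"

lemma bt_depth: "dt_depth (bt f m acc) = m"
  by (induction m arbitrary: acc) auto

lemma bt_valid: "dt_valid (length acc + m) (bt f m acc)"
proof (induction m arbitrary: acc)
  case (Suc m)
  have "dt_valid (length acc + Suc m) (bt f m (acc @ [b]))" for b using Suc.IH[of "acc @ [b]"] by simp
  thus ?case by simp
qed simp

lemma bt_eval: "length x = length acc + m \<Longrightarrow> take (length acc) x = acc \<Longrightarrow> dt_eval (bt f m acc) x = f x"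
proof (induction m arbitrary: acc)
  case 0
  hence "x = acc" by simp
  thus ?case by simp
next
  case (Suc m)
  have lt: "length acc < length x" using Suc.prems by simp
  have tk: "take (length (acc @ [x ! length acc])) x = acc @ [x ! length acc]"
    using Suc.prems lt by (simp add: take_Suc_conv_app_nth)
  have len: "length x = length (acc @ [x ! length acc]) + m" using Suc.prems by simp
  show ?case
  proof (cases "x ! length acc")
    case True
    thus ?thesis using Suc.IH[OF len tk] True by simp
  next
    case False
    thus ?thesis using Suc.IH[OF len tk] False by simp
  qed
qed

lemma D_le_n: "D n f \<le> n"
proof -
  have "dt_valid n (bt f n []) \<and> dt_depth (bt f n []) = n \<and> (\<forall>x. length x = n \<longrightarrow> dt_eval (bt f n []) x = f x)"
    using bt_valid[of "[]" n f] bt_depth[of f n "[]"] bt_eval[of _ "[]" n f] by simp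
  thus ?thesis unfolding D_def by (intro Least_le) blast
qed

theorem corollary3p16:
  shows "\<exists>C::real. \<forall>(n::nat) (f::bool list \<Rightarrow> bool). symmetric_fun n f \<longrightarrow>
     real (D n f) \<le> C * max (real (N n f) ^ 6) (real (N n (\<lambda>x. \<not> f x)) ^ 6)"
proof (intro exI[of _ 66] allI impI)
  fix n and f :: "bool list \<Rightarrow> bool"
  assume sym: "symmetric_fun n f"
  define F where "F = (\<lambda>k. f (lst n {0..<k}))"
  have fx: "f x = F (hamming_weight x)" if x: "length x = n" for x
  proof -
    have hx: "hamming_weight x \<le> n" using x length_filter_le[of id x] unfolding hamming_weight_def by simp
    have hw: "hamming_weight x = hamming_weight (lst n {0..<hamming_weight x})"
      using hw_lst[of "{0..<hamming_weight x}" n] hx by simp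
    have "f x = f (lst n {0..<hamming_weight x})"
      using sym[unfolded symmetric_fun_def, rule_format, OF x length_lst hw] .
    thus ?thesis unfolding F_def .
  qed
  have nonneg: "0 \<le> max (real (N n f) ^ 6) (real (N n (\<lambda>x. \<not> f x)) ^ 6)"
    by (rule order_trans[OF _ max.cobounded1]) simp
  show "real (D n f) \<le> 66 * max (real (N n f) ^ 6) (real (N n (\<lambda>x. \<not> f x)) ^ 6)"
  proof (cases "\<forall>a\<le>n. \<forall>b\<le>n. F a = F b")
    case True
    have "\<forall>x. length x = n \<longrightarrow> dt_eval (Leaf (F 0)) x = f x"
    proof (intro allI impI)
      fix x :: "bool list" assume x: "length x = n"
      have "hamming_weight x \<le> n" using x length_filter_le[of id x] unfolding hamming_weight_def by simp
      hence "F (hamming_weight x) = F 0" using True by blast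
      thus "dt_eval (Leaf (F 0)) x = f x" using fx[OF x] by simp
    qed
    hence "D n f \<le> 0" unfolding D_def by (intro Least_le) (rule exI[of _ "Leaf (F 0)"], simp)
    thus ?thesis using nonneg by simp
  next
    case False
    then obtain a b where ab: "a \<le> n" "b \<le> n" "F a \<noteq> F b" by blast
    have symn: "symmetric_fun n (\<lambda>x. \<not> f x)" using sym unfolding symmetric_fun_def by blast
    obtain Q1 where Q1: "degree Q1 \<le> 2 * N n f" "\<forall>k\<le>n.
       (\<not> f (lst n {0..<k}) \<longrightarrow> \<bar>poly Q1 (real k)\<bar> \<le> 1/9) \<and> (f (lst n {0..<k}) \<longrightarrow> poly Q1 (real k) \<ge> 1)"
      using symQ[OF sym] by blast
    obtain Q2 where Q2: "degree Q2 \<le> 2 * N n (\<lambda>x. \<not> f x)" "\<forall>k\<le>n.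
       (\<not> \<not> f (lst n {0..<k}) \<longrightarrow> \<bar>poly Q2 (real k)\<bar> \<le> 1/9) \<and> (\<not> f (lst n {0..<k}) \<longrightarrow> poly Q2 (real k) \<ge> 1)"
      using symQ[OF symn] by blast
    define m where "m = max (N n f) (N n (\<lambda>x. \<not> f x))"
    have d1: "degree Q1 \<le> 2 * m" using Q1(1) by (simp add: m_def)
    have d2: "degree Q2 \<le> 2 * m" using Q2(1) by (simp add: m_def)
    have q1s: "\<And>k. k \<le> n \<Longrightarrow> \<not> F k \<Longrightarrow> \<bar>poly Q1 (real k)\<bar> \<le> 1/9" using Q1(2) unfolding F_def by blast
    have q1l: "\<And>k. k \<le> n \<Longrightarrow> F k \<Longrightarrow> poly Q1 (real k) \<ge> 1" using Q1(2) unfolding F_def by blast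
    have q2s: "\<And>k. k \<le> n \<Longrightarrow> F k \<Longrightarrow> \<bar>poly Q2 (real k)\<bar> \<le> 1/9" using Q2(2) unfolding F_def by blast
    have q2l: "\<And>k. k \<le> n \<Longrightarrow> \<not> F k \<Longrightarrow> poly Q2 (real k) \<ge> 1" using Q2(2) unfolding F_def by blast
    have h: "n + 1 \<le> (2 * m) * (8 * (2 * m)^2 + 1)" by (rule comb[OF d1 d2 q1s q1l q2s q2l ab])
    have "(2 * m)^2 = 4 * m^2" by (simp add: power_mult_distrib)
    hence nb: "n + 1 \<le> 2 * m * (32 * m^2 + 1)" using h by simp
    have m1: "m \<ge> 1" using nb by (cases "m = 0") auto
    have "2 * m * (32 * m^2 + 1) \<le> 66 * m^3"
    proof -
      have "m \<le> m^3" using m1 by (simp add: power3_eq_cube)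
      thus ?thesis by (simp add: power2_eq_square power3_eq_cube algebra_simps)
    qed
    moreover have "m^3 \<le> m^6" using m1 by (intro power_increasing) auto
    ultimately have "n \<le> 66 * m^6" using nb by linarith
    hence "D n f \<le> 66 * m^6" using D_le_n[of n f] by linarith
    hence "real (D n f) \<le> real (66 * m^6)" by (simp only: of_nat_le_iff)
    also have "real (66 * m^6) = 66 * real m ^ 6" by simp
    also have "real m ^ 6 = max (real (N n f) ^ 6) (real (N n (\<lambda>x. \<not> f x)) ^ 6)"
      unfolding m_def by (cases "N n f \<le> N n (\<lambda>x. \<not> f x)") (auto simp: max_def power_mono)
    finally show ?thesis .
  qed
qed


end
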